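(* Let $G_1,G_2$ be cubic graphs. Every proper $3$-edge coloring $f$ of $G=G_1\,Y\,G_2$ (respectively $G=G_1\,H\,G_2$) can be written as $c_1\,Y\,d_1$ (respectively $c_1\,H\,d_1$), where $c_1$ is some proper $3$-edge coloring of $G_1$ and $d_1$ is some proper $3$-edge coloring of $G_2$.
   Context: Graphs are finite; multiple edges allowed, loops not. Proper $3$-edge colorings use colors $\{1,2,3\}$, adjacent edges receiving different colors. Composition Y: choose $v_1\in G_1$ with incident edges $x_j=v_1s_{1j}$ and $v_2\in G_2$ with incident edges $y_j=v_2s_{2j}$ ($j=1,2,3$); $G_1\,Y\,G_2$ deletes $v_1,v_2$ and adds edges $s_{1j}s_{2j}$ (the edge obtained by identifying $x_j$ with $y_j$). Composition H: choose edges $x=s_{11}s_{12}\in G_1$, $y=s_{21}s_{22}\in G_2$; $G_1\,H\,G_2$ deletes $x,y$ and adds $s_{11}s_{21},s_{12}s_{22}$. For proper $3$-edge colorings $c$ of $G_1$ and $d$ of $G_2$: let $\hat d$ be a coloring of $G_2$ obtained from $d$ by a global permutation of colors such that $\hat d(y_j)=c(x_j)$ for $j=1,2,3$; then $c\,Y\,d$ colors edges of $G_1-v_1$ by $c$, edges of $G_2-v_2$ by $\hat d$, and the edge $s_{1j}s_{2j}$ by $c(x_j)=\hat d(y_j)$. Similarly let $\tilde d$ be obtained from $d$ by a global color permutation with $\tilde d(y)=c(x)$; then $c\,H\,d$ colors edges of $G_1-x$ by $c$, edges of $G_2-y$ by $\tilde d$, and both new edges by $c(x)=\tilde d(y)$.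 *)

theory Defs
  imports Main
begin

text \<open>Finite multigraphs without loops: a vertex set, an edge set (edge identities,
  so parallel edges are allowed) and for each edge its set of two distinct ends.\<close>

record ('v, 'e) mgraph =
  verts :: "'v set"
  edges :: "'e set"
  ends  :: "'e \<Rightarrow> 'v set"

definition wf_graph :: "('v, 'e) mgraph \<Rightarrow> bool" where
  "wf_graph G \<longleftrightarrow> finite (verts G) \<and> finite (edges G) \<and>
     (\<forall>e \<in> edges G. ends G e \<subseteq> verts G \<and> card (ends G e) = 2)"

definition incident :: "('v, 'e) mgraph \<Rightarrow> 'v \<Rightarrow> 'e set" where
  "incident G v = {e \<in> edges G. v \<in> ends G e}"

definition cubic :: "('v, 'e) mgraph \<Rightarrow> bool" where
  "cubic G \<longleftrightarrow> wf_graph G \<and> (\<forall>v \<in> verts G. card (incident G v) = 3)"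

definition proper3 :: "('v, 'e) mgraph \<Rightarrow> ('e \<Rightarrow> nat) \<Rightarrow> bool" where
  "proper3 G c \<longleftrightarrow> (\<forall>e \<in> edges G. c e \<in> {1,2,3}) \<and>
     (\<forall>e \<in> edges G. \<forall>e' \<in> edges G. e \<noteq> e' \<and> ends G e \<inter> ends G e' \<noteq> {} \<longrightarrow> c e \<noteq> c e')"

definition other :: "('v, 'e) mgraph \<Rightarrow> 'e \<Rightarrow> 'v \<Rightarrow> 'v" where
  "other G e v = (THE u. ends G e = {v, u})"

definition Y_data :: "('v, 'e) mgraph \<Rightarrow> 'v \<Rightarrow> 'e \<Rightarrow> 'e \<Rightarrow> 'e \<Rightarrow> bool" where
  "Y_data G v x1 x2 x3 \<longleftrightarrow> v \<in> verts G \<and> x1 \<noteq> x2 \<and> x1 \<noteq> x3 \<and> x2 \<noteq> x3 \<and>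
     incident G v = {x1, x2, x3}"

text \<open>G1 Y G2: delete v1, v2; the edge x_j of G1 (identified with y_j of G2) now joins
  s_1j and s_2j.  Vertices/edges of G1 are tagged Inl, those of G2 Inr.\<close>
definition Y_comp ::
  "('v1, 'e1) mgraph \<Rightarrow> 'v1 \<Rightarrow> 'e1 \<Rightarrow> 'e1 \<Rightarrow> 'e1 \<Rightarrow>
   ('v2, 'e2) mgraph \<Rightarrow> 'v2 \<Rightarrow> 'e2 \<Rightarrow> 'e2 \<Rightarrow> 'e2 \<Rightarrow> ('v1 + 'v2, 'e1 + 'e2) mgraph" where
  "Y_comp G1 v1 x1 x2 x3 G2 v2 y1 y2 y3 =
    \<lparr> verts = Inl ` (verts G1 - {v1}) \<union> Inr ` (verts G2 - {v2}),
      edges = Inl ` edges G1 \<union> Inr ` (edges G2 - {y1, y2, y3}),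
      ends = (\<lambda>e. case e of
                 Inl a \<Rightarrow>
                   (if a = x1 then {Inl (other G1 x1 v1), Inr (other G2 y1 v2)}
                    else if a = x2 then {Inl (other G1 x2 v1), Inr (other G2 y2 v2)}
                    else if a = x3 then {Inl (other G1 x3 v1), Inr (other G2 y3 v2)}
                    else Inl ` ends G1 a)
               | Inr b \<Rightarrow> Inr ` ends G2 b) \<rparr>"

definition H_data :: "('v, 'e) mgraph \<Rightarrow> 'e \<Rightarrow> 'v \<Rightarrow> 'v \<Rightarrow> bool" where
  "H_data G x s1 s2 \<longleftrightarrow> x \<in> edges G \<and> s1 \<noteq> s2 \<and> ends G x = {s1, s2}"

text \<open>G1 H G2: delete x = s11 s12 and y = s21 s22, add s11 s21 (represented by Inl x)
  and s12 s22 (represented by Inr y).\<close>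
definition H_comp ::
  "('v1, 'e1) mgraph \<Rightarrow> 'e1 \<Rightarrow> 'v1 \<Rightarrow> 'v1 \<Rightarrow>
   ('v2, 'e2) mgraph \<Rightarrow> 'e2 \<Rightarrow> 'v2 \<Rightarrow> 'v2 \<Rightarrow> ('v1 + 'v2, 'e1 + 'e2) mgraph" where
  "H_comp G1 x s11 s12 G2 y s21 s22 =
    \<lparr> verts = Inl ` verts G1 \<union> Inr ` verts G2,
      edges = Inl ` edges G1 \<union> Inr ` edges G2,
      ends = (\<lambda>e. case e of
                 Inl a \<Rightarrow> (if a = x then {Inl s11, Inr s21} else Inl ` ends G1 a)
               | Inr b \<Rightarrow> (if b = y then {Inl s12, Inr s22} else Inr ` ends G2 b)) \<rparr>"

definition is_Y_coloring ::
  "('v1, 'e1) mgraph \<Rightarrow> 'v1 \<Rightarrow> 'e1 \<Rightarrow> 'e1 \<Rightarrow> 'e1 \<Rightarrow>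
   ('v2, 'e2) mgraph \<Rightarrow> 'v2 \<Rightarrow> 'e2 \<Rightarrow> 'e2 \<Rightarrow> 'e2 \<Rightarrow>
   ('e1 \<Rightarrow> nat) \<Rightarrow> ('e2 \<Rightarrow> nat) \<Rightarrow> ('e1 + 'e2 \<Rightarrow> nat) \<Rightarrow> bool" where
  "is_Y_coloring G1 v1 x1 x2 x3 G2 v2 y1 y2 y3 c d f \<longleftrightarrow>
    (\<exists>\<pi>. bij_betw \<pi> {1,2,3} {1,2,3} \<and>
       \<pi> (d y1) = c x1 \<and> \<pi> (d y2) = c x2 \<and> \<pi> (d y3) = c x3 \<and>
       (\<forall>e \<in> edges (Y_comp G1 v1 x1 x2 x3 G2 v2 y1 y2 y3).
          f e = (case e of Inl a \<Rightarrow> c a | Inr b \<Rightarrow> \<pi> (d b))))"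

definition is_H_coloring ::
  "('v1, 'e1) mgraph \<Rightarrow> 'e1 \<Rightarrow> 'v1 \<Rightarrow> 'v1 \<Rightarrow>
   ('v2, 'e2) mgraph \<Rightarrow> 'e2 \<Rightarrow> 'v2 \<Rightarrow> 'v2 \<Rightarrow>
   ('e1 \<Rightarrow> nat) \<Rightarrow> ('e2 \<Rightarrow> nat) \<Rightarrow> ('e1 + 'e2 \<Rightarrow> nat) \<Rightarrow> bool" where
  "is_H_coloring G1 x s11 s12 G2 y s21 s22 c d f \<longleftrightarrow>
    (\<exists>\<pi>. bij_betw \<pi> {1,2,3} {1,2,3} \<and> \<pi> (d y) = c x \<and>
       (\<forall>e \<in> edges (H_comp G1 x s11 s12 G2 y s21 s22).
          f e = (case e of Inl a \<Rightarrow> c a | Inr b \<Rightarrow> \<pi> (d b))))"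

end

theory Submission
  imports Defs
begin


lemma other_eq:
  assumes "card (ends G e) = 2" "v \<in> ends G e"
  shows "ends G e = {v, other G e v}" "other G e v \<noteq> v"
proof -
  obtain u where u: "ends G e = {v,u}" "u \<noteq> v"
    using assms by (auto simp: card_2_iff doubleton_eq_iff)
  have "other G e v = u" unfolding other_def
    using u by (intro the_equality) (auto simp: doubleton_eq_iff)
  thus "ends G e = {v, other G e v}" "other G e v \<noteq> v" using u by auto
qed

lemma even_sum_card:
  assumes "finite S"
  shows "even (sum (g::'a\<Rightarrow>nat) S) = even (card {x\<in>S. odd (g x)})"
  using assms
proof (induction S rule: finite_induct)
  case empty then show ?case by simp
next
  case (insert x S)
  have "{y\<in>insert x S. odd (g y)} = (if odd (g x) then insert x {y\<in>S. odd (g y)} else {y\<in>S. odd (g y)})"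
    by auto
  then show ?case using insert by (auto simp: card_insert_if)
qed

lemma one_color:
  assumes fin: "finite (edges G)" and p: "proper3 G f" and c3: "3 \<le> card (incident G v)"
    and i: "i \<in> {1,2,3::nat}"
  shows "card {e \<in> edges G. f e = i \<and> v \<in> ends G e} = 1"
proof -
  let ?I = "incident G v"
  have finI: "finite ?I" using fin unfolding incident_def by simp
  have inj: "inj_on f ?I" using p unfolding inj_on_def proper3_def incident_def by blast
  have sub: "f ` ?I \<subseteq> {1,2,3}" using p unfolding proper3_def incident_def by auto
  have "card (f ` ?I) = card ?I" using card_image[OF inj] .
  hence "card (f ` ?I) \<ge> 3" using c3 by simp
  hence eq: "f ` ?I = {1,2,3}" using sub by (intro card_seteq) auto
  then obtain e where e: "e \<in> ?I" "f e = i" using i by (metis imageE)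
  have "{e \<in> edges G. f e = i \<and> v \<in> ends G e} = {e}" using e inj
    by (auto simp: incident_def inj_on_def)
  thus ?thesis by simp
qed

lemma parity:
  assumes fin: "finite (edges G)" "\<forall>e\<in>edges G. finite (ends G e)" "finite A"
    and p: "proper3 G f" and d: "\<forall>v\<in>A. 3 \<le> card (incident G v)" and i: "i \<in> {1,2,3}"
  shows "even (card A) = even (card {e \<in> edges G. f e = i \<and> odd (card (ends G e \<inter> A))})"
proof -
  let ?E = "{e \<in> edges G. f e = i}"
  have finE: "finite ?E" using fin by simp
  have "card A = (\<Sum>v\<in>A. card {e \<in> edges G. f e = i \<and> v \<in> ends G e})"
    using one_color[OF fin(1) p _ i] d by simp
  also have "\<dots> = (\<Sum>v\<in>A. \<Sum>e\<in>?E. if v \<in> ends G e then 1 else 0)"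
    using finE by (intro sum.cong refl) (simp add: sum.If_cases Int_def conj_commute conj_left_commute)
  also have "\<dots> = (\<Sum>e\<in>?E. \<Sum>v\<in>A. if v \<in> ends G e then 1 else 0)"
    by (rule sum.swap)
  also have "\<dots> = (\<Sum>e\<in>?E. card (ends G e \<inter> A))"
    using fin(3) by (intro sum.cong refl) (simp add: sum.If_cases Int_def conj_commute)
  finally have "even (card A) = even (card {e\<in>?E. odd (card (ends G e \<inter> A))})"
    using even_sum_card[OF finE] by simp
  moreover have "{e\<in>?E. odd (card (ends G e \<inter> A))} = {e \<in> edges G. f e = i \<and> odd (card (ends G e \<inter> A))}" by auto
  ultimately show ?thesis by simp
qed


lemma card3_filter:
  assumes "e1 \<noteq> e2" "e1 \<noteq> e3" "e2 \<noteq> e3"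
  shows "card {e\<in>{e1,e2,e3}. P e} = (if P e1 then 1 else 0) + (if P e2 then 1 else 0) + (if P e3 then 1 else 0)"
proof -
  have "card {e\<in>{e1,e2,e3}. P e} = (\<Sum>e\<in>{e1,e2,e3}. if P e then 1 else 0)"
    by (simp add: sum.If_cases Int_def)
  thus ?thesis using assms by simp
qed

lemma card2_filter:
  assumes "e1 \<noteq> e2"
  shows "card {e\<in>{e1,e2}. P e} = (if P e1 then 1 else 0) + (if P e2 then 1 else 0)"
proof -
  have "card {e\<in>{e1,e2}. P e} = (\<Sum>e\<in>{e1,e2}. if P e then 1 else 0)"
    by (simp add: sum.If_cases Int_def)
  thus ?thesis using assms by simp
qed

lemma three_distinct:
  assumes d: "e1 \<noteq> e2" "e1 \<noteq> e3" "e2 \<noteq> e3"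
    and c: "f e1 \<in> {1,2,3::nat}" "f e2 \<in> {1,2,3}" "f e3 \<in> {1,2,3}"
    and p: "\<forall>i\<in>{1,2,3::nat}. even n = even (card {e\<in>{e1,e2,e3}. f e = i})"
  shows "f e1 \<noteq> f e2 \<and> f e1 \<noteq> f e3 \<and> f e2 \<noteq> f e3"
proof -
  have p': "\<forall>i\<in>{1,2,3::nat}. even n = even ((if f e1 = i then 1 else 0) + (if f e2 = i then 1 else 0) + (if f e3 = i then 1 else (0::nat)))"
    using p by (simp only: card3_filter[OF d])
  have "f e1 = 1 \<or> f e1 = 2 \<or> f e1 = 3" "f e2 = 1 \<or> f e2 = 2 \<or> f e2 = 3" using c by auto
  moreover have "f e3 = 1 \<or> f e3 = 2 \<or> f e3 = 3" using c by auto
  ultimately show ?thesis using p' by (elim disjE; simp)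
qed

lemma two_same:
  assumes d: "e1 \<noteq> e2"
    and c: "f e1 \<in> {1,2,3::nat}" "f e2 \<in> {1,2,3}"
    and p: "\<forall>i\<in>{1,2,3::nat}. even n = even (card {e\<in>{e1,e2}. f e = i})"
  shows "f e1 = f e2"
proof -
  have p': "\<forall>i\<in>{1,2,3::nat}. even n = even ((if f e1 = i then 1 else 0) + (if f e2 = i then 1 else (0::nat)))"
    using p by (simp only: card2_filter[OF d])
  have "f e1 = 1 \<or> f e1 = 2 \<or> f e1 = 3" "f e2 = 1 \<or> f e2 = 2 \<or> f e2 = 3" using c by auto
  then show ?thesis using p' by (elim disjE; simp)
qed


lemma Y_part:
  fixes G1 :: "('v1, 'e1) mgraph" and G2 :: "('v2, 'e2) mgraph"
  assumes cub1: "cubic G1" and cub2: "cubic G2"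
    and yd1: "Y_data G1 v1 x1 x2 x3" and yd2: "Y_data G2 v2 y1 y2 y3"
    and pf: "proper3 (Y_comp G1 v1 x1 x2 x3 G2 v2 y1 y2 y3) f"
  shows "\<exists>c d. proper3 G1 c \<and> proper3 G2 d \<and> is_Y_coloring G1 v1 x1 x2 x3 G2 v2 y1 y2 y3 c d f"
proof -
  define G where "G = Y_comp G1 v1 x1 x2 x3 G2 v2 y1 y2 y3"
  have p: "proper3 G f" using pf G_def by simp
  have w1: "wf_graph G1" and w2: "wf_graph G2" using cub1 cub2 by (auto simp: cubic_def)
  have deg1: "\<forall>v\<in>verts G1. card (incident G1 v) = 3" using cub1 by (auto simp: cubic_def)
  have fe1: "finite (edges G1)" and fv1: "finite (verts G1)" and fe2: "finite (edges G2)"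
    using w1 w2 by (auto simp: wf_graph_def)
  have e1: "\<And>e. e \<in> edges G1 \<Longrightarrow> ends G1 e \<subseteq> verts G1 \<and> card (ends G1 e) = 2"
    using w1 by (auto simp: wf_graph_def)
  have e2: "\<And>e. e \<in> edges G2 \<Longrightarrow> ends G2 e \<subseteq> verts G2 \<and> card (ends G2 e) = 2"
    using w2 by (auto simp: wf_graph_def)
  have inc1: "incident G1 v1 = {x1,x2,x3}" and dx: "x1 \<noteq> x2" "x1 \<noteq> x3" "x2 \<noteq> x3"
    and vv1: "v1 \<in> verts G1"
    using yd1 by (auto simp: Y_data_def)
  have inc2: "incident G2 v2 = {y1,y2,y3}" and dy: "y1 \<noteq> y2" "y1 \<noteq> y3" "y2 \<noteq> y3"
    using yd2 by (auto simp: Y_data_def)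
  have xE: "x1 \<in> edges G1" "x2 \<in> edges G1" "x3 \<in> edges G1"
    and xv: "v1 \<in> ends G1 x1" "v1 \<in> ends G1 x2" "v1 \<in> ends G1 x3"
    using inc1 unfolding incident_def by blast+
  have yE: "y1 \<in> edges G2" "y2 \<in> edges G2" "y3 \<in> edges G2"
    and yv: "v2 \<in> ends G2 y1" "v2 \<in> ends G2 y2" "v2 \<in> ends G2 y3"
    using inc2 unfolding incident_def by blast+
  have nx: "\<And>a. a \<in> edges G1 \<Longrightarrow> a \<notin> {x1,x2,x3} \<Longrightarrow> v1 \<notin> ends G1 a"
    using inc1 unfolding incident_def by blast
  have ny: "\<And>b. b \<in> edges G2 \<Longrightarrow> b \<notin> {y1,y2,y3} \<Longrightarrow> v2 \<notin> ends G2 b"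
    using inc2 unfolding incident_def by blast
  have ox: "\<And>x. x \<in> edges G1 \<Longrightarrow> v1 \<in> ends G1 x \<Longrightarrow>
      ends G1 x = {v1, other G1 x v1} \<and> other G1 x v1 \<noteq> v1 \<and> other G1 x v1 \<in> verts G1"
  proof -
    fix x assume "x \<in> edges G1" "v1 \<in> ends G1 x"
    then show "ends G1 x = {v1, other G1 x v1} \<and> other G1 x v1 \<noteq> v1 \<and> other G1 x v1 \<in> verts G1"
      using other_eq[of G1 x v1] e1 by blast
  qed
  have oy: "\<And>y. y \<in> edges G2 \<Longrightarrow> v2 \<in> ends G2 y \<Longrightarrow>
      ends G2 y = {v2, other G2 y v2} \<and> other G2 y v2 \<noteq> v2"
    using other_eq e2 by metis
  have edgesG: "edges G = Inl ` edges G1 \<union> Inr ` (edges G2 - {y1,y2,y3})"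
    by (simp add: G_def Y_comp_def)
  have endsL: "\<And>a. ends G (Inl a) = (if a = x1 then {Inl (other G1 x1 v1), Inr (other G2 y1 v2)}
                    else if a = x2 then {Inl (other G1 x2 v1), Inr (other G2 y2 v2)}
                    else if a = x3 then {Inl (other G1 x3 v1), Inr (other G2 y3 v2)}
                    else Inl ` ends G1 a)"
    by (simp add: G_def Y_comp_def)
  have endsR: "\<And>b. ends G (Inr b) = Inr ` ends G2 b"
    by (simp add: G_def Y_comp_def)
  have L1: "\<And>a w. a \<in> edges G1 \<Longrightarrow> w \<noteq> v1 \<Longrightarrow> Inl w \<in> ends G (Inl a) \<longleftrightarrow> w \<in> ends G1 a"
  proof -
    fix a w assume a: "a \<in> edges G1" and w: "w \<noteq> v1"
    show "Inl w \<in> ends G (Inl a) \<longleftrightarrow> w \<in> ends G1 a"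
    proof (cases "a \<in> {x1,x2,x3}")
      case True
      then have "ends G1 a = {v1, other G1 a v1}" using ox xE xv by blast
      then show ?thesis using True w unfolding endsL by auto
    next
      case False then show ?thesis unfolding endsL by auto
    qed
  qed
  define g where "g b = (if b = y1 then Inl x1 else if b = y2 then Inl x2 else if b = y3 then Inl x3 else Inr b)" for b
  have L2: "\<And>b w. b \<in> edges G2 \<Longrightarrow> w \<noteq> v2 \<Longrightarrow> Inr w \<in> ends G (g b) \<longleftrightarrow> w \<in> ends G2 b"
  proof -
    fix b w assume b: "b \<in> edges G2" and w: "w \<noteq> v2"
    show "Inr w \<in> ends G (g b) \<longleftrightarrow> w \<in> ends G2 b"
    proof (cases "b \<in> {y1,y2,y3}")
      case True
      then have eb: "ends G2 b = {v2, other G2 b v2}" using oy yE yv by blast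
      from True consider "b = y1" | "b = y2" | "b = y3" by blast
      then show ?thesis
      proof cases
        case 1 then show ?thesis using w eb by (simp add: g_def endsL)
      next
        case 2 then show ?thesis using w eb dy dx by (simp add: g_def endsL)
      next
        case 3 then show ?thesis using w eb dy dx by (simp add: g_def endsL)
      qed
    next
      case False then show ?thesis by (auto simp: g_def endsR)
    qed
  qed
  have gE: "\<And>b. b \<in> edges G2 \<Longrightarrow> g b \<in> edges G" using xE unfolding edgesG g_def by auto
  have gi: "inj_on g (edges G2)" unfolding inj_on_def g_def using dx dy by auto
  have LE: "\<And>a. a \<in> edges G1 \<Longrightarrow> Inl a \<in> edges G" unfolding edgesG by auto
  define A where "A = (Inl ` (verts G1 - {v1}) :: ('v1 + 'v2) set)"
  have feG: "finite (edges G)" using fe1 fe2 unfolding edgesG by auto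
  have fnG: "\<forall>e\<in>edges G. finite (ends G e)"
  proof
    fix e assume "e \<in> edges G"
    have f1: "\<And>a. a \<in> edges G1 \<Longrightarrow> finite (ends G1 a)" using e1 by (metis card.infinite zero_neq_numeral)
    have f2: "\<And>b. b \<in> edges G2 \<Longrightarrow> finite (ends G2 b)" using e2 by (metis card.infinite zero_neq_numeral)
    show "finite (ends G e)" using \<open>e \<in> edges G\<close> f1 f2 unfolding edgesG
      by (auto simp: endsL endsR)
  qed
  have fA: "finite A" unfolding A_def using fv1 by simp
  have dA: "\<forall>v\<in>A. 3 \<le> card (incident G v)"
  proof
    fix v assume "v \<in> A"
    then obtain u where u: "v = Inl u" "u \<in> verts G1" "u \<noteq> v1" unfolding A_def by auto
    have sub: "Inl ` incident G1 u \<subseteq> incident G v"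
      using u L1 LE unfolding incident_def by auto
    have "card (Inl ` incident G1 u :: ('e1 + 'e2) set) = 3" using deg1 u by (simp add: card_image)
    moreover have "finite (incident G v)" using feG unfolding incident_def by simp
    ultimately show "3 \<le> card (incident G v)" using card_mono[OF _ sub] by linarith
  qed
  have cut: "\<And>e. e \<in> edges G \<Longrightarrow> odd (card (ends G e \<inter> A)) \<longleftrightarrow> e \<in> {Inl x1, Inl x2, Inl x3}"
  proof -
    fix e assume eG: "e \<in> edges G"
    show "odd (card (ends G e \<inter> A)) \<longleftrightarrow> e \<in> {Inl x1, Inl x2, Inl x3}"
    proof (cases e)
      case (Inl a)
      then have a: "a \<in> edges G1" using eG unfolding edgesG by auto
      show ?thesis
      proof (cases "a \<in> {x1,x2,x3}")
        case True
        then have "ends G (Inl a) \<inter> A = {Inl (other G1 a v1)}"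
          using ox[of a] xE xv unfolding A_def endsL by auto
        then show ?thesis using Inl True by simp
      next
        case False
        then have "ends G (Inl a) \<inter> A = Inl ` ends G1 a"
          using nx[OF a] e1[OF a] unfolding A_def endsL by auto
        then have "card (ends G (Inl a) \<inter> A) = 2" using e1[OF a] by (simp add: card_image)
        then show ?thesis using Inl False by simp
      qed
    next
      case (Inr b)
      then have "ends G e \<inter> A = {}" by (auto simp: A_def endsR)
      then show ?thesis using Inr by simp
    qed
  qed
  have colG: "\<And>e. e \<in> edges G \<Longrightarrow> f e \<in> {1,2,3}" using p unfolding proper3_def by blast
  have dLx: "Inl x1 \<noteq> Inl x2" "Inl x1 \<noteq> Inl x3" "Inl x2 \<noteq> Inl x3" using dx by auto
  have par: "\<forall>i\<in>{1,2,3::nat}. even (card A) = even (card {e\<in>{Inl x1, Inl x2, Inl x3}. f e = i})"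
  proof
    fix i :: nat assume i: "i \<in> {1,2,3}"
    have "{e \<in> edges G. f e = i \<and> odd (card (ends G e \<inter> A))} = {e\<in>{Inl x1, Inl x2, Inl x3}. f e = i}"
      using cut LE xE by auto
    then show "even (card A) = even (card {e\<in>{Inl x1, Inl x2, Inl x3}. f e = i})"
      using parity[OF feG fnG fA p dA i] by simp
  qed
  have dist: "f (Inl x1) \<noteq> f (Inl x2) \<and> f (Inl x1) \<noteq> f (Inl x3) \<and> f (Inl x2) \<noteq> f (Inl x3)"
    using three_distinct[OF dLx colG colG colG par] LE xE by blast
  define c where "c a = f (Inl a)" for a
  define d where "d b = f (g b)" for b
  have pc: "proper3 G1 c"
    unfolding proper3_def
  proof (intro conjI ballI impI)
    fix a assume "a \<in> edges G1" then show "c a \<in> {1,2,3}" using colG LE c_def by simp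
  next
    fix a a' assume a: "a \<in> edges G1" and a': "a' \<in> edges G1" and h: "a \<noteq> a' \<and> ends G1 a \<inter> ends G1 a' \<noteq> {}"
    then obtain w where w: "w \<in> ends G1 a" "w \<in> ends G1 a'" by blast
    show "c a \<noteq> c a'"
    proof (cases "w = v1")
      case True
      then have "a \<in> {x1,x2,x3}" "a' \<in> {x1,x2,x3}" using inc1 a a' w unfolding incident_def by blast+
      then show ?thesis using h dist unfolding c_def by auto
    next
      case False
      then have "Inl w \<in> ends G (Inl a)" "Inl w \<in> ends G (Inl a')" using L1 a a' w by auto
      then show ?thesis using p LE[OF a] LE[OF a'] h unfolding proper3_def c_def by blast
    qed
  qed
  have pd: "proper3 G2 d"
    unfolding proper3_def
  proof (intro conjI ballI impI)
    fix b assume "b \<in> edges G2" then show "d b \<in> {1,2,3}" using colG gE d_def by simp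
  next
    fix b b' assume b: "b \<in> edges G2" and b': "b' \<in> edges G2" and h: "b \<noteq> b' \<and> ends G2 b \<inter> ends G2 b' \<noteq> {}"
    then obtain w where w: "w \<in> ends G2 b" "w \<in> ends G2 b'" by blast
    show "d b \<noteq> d b'"
    proof (cases "w = v2")
      case True
      then have "b \<in> {y1,y2,y3}" "b' \<in> {y1,y2,y3}" using inc2 b b' w unfolding incident_def by blast+
      then show ?thesis using h dist unfolding d_def g_def by auto
    next
      case False
      then have "Inr w \<in> ends G (g b)" "Inr w \<in> ends G (g b')" using L2 b b' w by auto
      moreover have "g b \<noteq> g b'" using gi b b' h unfolding inj_on_def by blast
      ultimately show ?thesis using p gE[OF b] gE[OF b'] unfolding proper3_def d_def by blast
    qed
  qed
  have "is_Y_coloring G1 v1 x1 x2 x3 G2 v2 y1 y2 y3 c d f"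
    unfolding is_Y_coloring_def
  proof (intro exI[of _ id] conjI)
    show "bij_betw id {1,2,3::nat} {1,2,3}" by simp
    show "id (d y1) = c x1" "id (d y2) = c x2" "id (d y3) = c x3"
      using dy unfolding d_def g_def c_def by auto
    show "\<forall>e\<in>edges (Y_comp G1 v1 x1 x2 x3 G2 v2 y1 y2 y3). f e = (case e of Inl a \<Rightarrow> c a | Inr b \<Rightarrow> id (d b))"
      using edgesG unfolding G_def[symmetric] c_def d_def g_def by auto
  qed
  then show ?thesis using pc pd by blast
qed


lemma H_part:
  fixes G1 :: "('v1, 'e1) mgraph" and G2 :: "('v2, 'e2) mgraph"
  assumes cub1: "cubic G1" and cub2: "cubic G2"
    and hd1: "H_data G1 x s11 s12" and hd2: "H_data G2 y s21 s22"
    and pf: "proper3 (H_comp G1 x s11 s12 G2 y s21 s22) f"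
  shows "\<exists>c d. proper3 G1 c \<and> proper3 G2 d \<and> is_H_coloring G1 x s11 s12 G2 y s21 s22 c d f"
proof -
  define G where "G = H_comp G1 x s11 s12 G2 y s21 s22"
  have p: "proper3 G f" using pf G_def by simp
  have w1: "wf_graph G1" and w2: "wf_graph G2" using cub1 cub2 by (auto simp: cubic_def)
  have deg1: "\<forall>v\<in>verts G1. card (incident G1 v) = 3" using cub1 by (auto simp: cubic_def)
  have fe1: "finite (edges G1)" and fv1: "finite (verts G1)" and fe2: "finite (edges G2)"
    using w1 w2 by (auto simp: wf_graph_def)
  have e1: "\<And>e. e \<in> edges G1 \<Longrightarrow> ends G1 e \<subseteq> verts G1 \<and> card (ends G1 e) = 2"
    using w1 by (auto simp: wf_graph_def)
  have e2: "\<And>e. e \<in> edges G2 \<Longrightarrow> ends G2 e \<subseteq> verts G2 \<and> card (ends G2 e) = 2"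
    using w2 by (auto simp: wf_graph_def)
  have xE: "x \<in> edges G1" and sx: "s11 \<noteq> s12" "ends G1 x = {s11, s12}"
    using hd1 by (auto simp: H_data_def)
  have yE: "y \<in> edges G2" and sy: "s21 \<noteq> s22" "ends G2 y = {s21, s22}"
    using hd2 by (auto simp: H_data_def)
  have sV: "s11 \<in> verts G1" "s12 \<in> verts G1" using e1[OF xE] sx by auto
  have edgesG: "edges G = Inl ` edges G1 \<union> Inr ` edges G2"
    by (simp add: G_def H_comp_def)
  have endsL: "\<And>a. ends G (Inl a) = (if a = x then {Inl s11, Inr s21} else Inl ` ends G1 a)"
    by (simp add: G_def H_comp_def)
  have endsR: "\<And>b. ends G (Inr b) = (if b = y then {Inl s12, Inr s22} else Inr ` ends G2 b)"
    by (simp add: G_def H_comp_def)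
  define h where "h u a = (if a = x then (if u = s11 then Inl x else Inr y) else Inl a)" for u a
  define k where "k u b = (if b = y then (if u = s21 then Inl x else Inr y) else Inr b)" for u b
  have hE: "\<And>u a. a \<in> edges G1 \<Longrightarrow> h u a \<in> edges G" using xE yE by (auto simp: h_def edgesG)
  have kE: "\<And>u b. b \<in> edges G2 \<Longrightarrow> k u b \<in> edges G" using xE yE by (auto simp: k_def edgesG)
  have hV: "\<And>u a. a \<in> edges G1 \<Longrightarrow> u \<in> ends G1 a \<Longrightarrow> Inl u \<in> ends G (h u a)"
    using sx by (auto simp: h_def endsL endsR)
  have kV: "\<And>u b. b \<in> edges G2 \<Longrightarrow> u \<in> ends G2 b \<Longrightarrow> Inr u \<in> ends G (k u b)"
    using sy by (auto simp: k_def endsL endsR)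
  have hI: "\<And>u. inj_on (h u) (edges G1)" by (auto simp: h_def inj_on_def)
  have kI: "\<And>u. inj_on (k u) (edges G2)" by (auto simp: k_def inj_on_def)
  define A where "A = (Inl ` verts G1 :: ('v1 + 'v2) set)"
  have feG: "finite (edges G)" using fe1 fe2 unfolding edgesG by auto
  have fnG: "\<forall>e\<in>edges G. finite (ends G e)"
  proof
    fix e assume "e \<in> edges G"
    have f1: "\<And>a. a \<in> edges G1 \<Longrightarrow> finite (ends G1 a)" using e1 by (metis card.infinite zero_neq_numeral)
    have f2: "\<And>b. b \<in> edges G2 \<Longrightarrow> finite (ends G2 b)" using e2 by (metis card.infinite zero_neq_numeral)
    show "finite (ends G e)" using \<open>e \<in> edges G\<close> f1 f2 unfolding edgesG
      by (auto simp: endsL endsR)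
  qed
  have fA: "finite A" unfolding A_def using fv1 by simp
  have dA: "\<forall>v\<in>A. 3 \<le> card (incident G v)"
  proof
    fix v assume "v \<in> A"
    then obtain u where u: "v = Inl u" "u \<in> verts G1" unfolding A_def by auto
    have sub: "h u ` incident G1 u \<subseteq> incident G v"
      using u hV hE unfolding incident_def by auto
    have "card (h u ` incident G1 u) = 3" using deg1 u card_image[of "h u" "incident G1 u"]
      inj_on_subset[OF hI[of u], of "incident G1 u"] unfolding incident_def by auto
    moreover have "finite (incident G v)" using feG unfolding incident_def by simp
    ultimately show "3 \<le> card (incident G v)" using card_mono[OF _ sub] by linarith
  qed
  have cut: "\<And>e. e \<in> edges G \<Longrightarrow> odd (card (ends G e \<inter> A)) \<longleftrightarrow> e \<in> {Inl x, Inr y}"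
  proof -
    fix e assume eG: "e \<in> edges G"
    show "odd (card (ends G e \<inter> A)) \<longleftrightarrow> e \<in> {Inl x, Inr y}"
    proof (cases e)
      case (Inl a)
      then have a: "a \<in> edges G1" using eG unfolding edgesG by auto
      show ?thesis
      proof (cases "a = x")
        case True
        then have "ends G (Inl a) \<inter> A = {Inl s11}" using sV by (auto simp: A_def endsL)
        then show ?thesis using Inl True by simp
      next
        case False
        then have "ends G (Inl a) \<inter> A = Inl ` ends G1 a"
          using e1[OF a] by (auto simp: A_def endsL)
        then have "card (ends G (Inl a) \<inter> A) = 2" using e1[OF a] by (simp add: card_image)
        then show ?thesis using Inl False by simp
      qed
    next
      case (Inr b)
      show ?thesis
      proof (cases "b = y")
        case True
        then have "ends G (Inr b) \<inter> A = {Inl s12}" using sV by (auto simp: A_def endsR)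
        then show ?thesis using Inr True by simp
      next
        case False
        then have "ends G (Inr b) \<inter> A = {}" by (auto simp: A_def endsR)
        then show ?thesis using Inr False by simp
      qed
    qed
  qed
  have colG: "\<And>e. e \<in> edges G \<Longrightarrow> f e \<in> {1,2,3}" using p unfolding proper3_def by blast
  have xyE: "Inl x \<in> edges G" "Inr y \<in> edges G" using xE yE edgesG by auto
  have par: "\<forall>i\<in>{1,2,3::nat}. even (card A) = even (card {e\<in>{Inl x, Inr y}. f e = i})"
  proof
    fix i :: nat assume i: "i \<in> {1,2,3}"
    have "{e \<in> edges G. f e = i \<and> odd (card (ends G e \<inter> A))} = {e\<in>{Inl x, Inr y}. f e = i}"
      using cut xyE by auto
    then show "even (card A) = even (card {e\<in>{Inl x, Inr y}. f e = i})"
      using parity[OF feG fnG fA p dA i] by simp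
  qed
  have same: "f (Inl x) = f (Inr y)"
    using two_same[of "Inl x" "Inr y" f, OF _ colG[OF xyE(1)] colG[OF xyE(2)] par] by simp
  define c where "c a = f (Inl a)" for a
  define d where "d b = f (Inr b)" for b
  have fh: "\<And>u a. f (h u a) = c a" using same by (simp add: h_def c_def)
  have fk: "\<And>u b. f (k u b) = d b" using same by (simp add: k_def d_def)
  have pc: "proper3 G1 c"
    unfolding proper3_def
  proof (intro conjI ballI impI)
    fix a assume "a \<in> edges G1" then show "c a \<in> {1,2,3}" using colG hE fh by metis
  next
    fix a a' assume a: "a \<in> edges G1" and a': "a' \<in> edges G1" and hh: "a \<noteq> a' \<and> ends G1 a \<inter> ends G1 a' \<noteq> {}"
    then obtain w where w: "w \<in> ends G1 a" "w \<in> ends G1 a'" by blast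
    have "Inl w \<in> ends G (h w a)" "Inl w \<in> ends G (h w a')" using hV a a' w by auto
    moreover have "h w a \<noteq> h w a'" using hI a a' hh unfolding inj_on_def by blast
    ultimately have "f (h w a) \<noteq> f (h w a')" using p hE[OF a] hE[OF a'] unfolding proper3_def by blast
    then show "c a \<noteq> c a'" using fh by simp
  qed
  have pd: "proper3 G2 d"
    unfolding proper3_def
  proof (intro conjI ballI impI)
    fix b assume "b \<in> edges G2" then show "d b \<in> {1,2,3}" using colG kE fk by metis
  next
    fix b b' assume b: "b \<in> edges G2" and b': "b' \<in> edges G2" and hh: "b \<noteq> b' \<and> ends G2 b \<inter> ends G2 b' \<noteq> {}"
    then obtain w where w: "w \<in> ends G2 b" "w \<in> ends G2 b'" by blast
    have "Inr w \<in> ends G (k w b)" "Inr w \<in> ends G (k w b')" using kV b b' w by auto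
    moreover have "k w b \<noteq> k w b'" using kI b b' hh unfolding inj_on_def by blast
    ultimately have "f (k w b) \<noteq> f (k w b')" using p kE[OF b] kE[OF b'] unfolding proper3_def by blast
    then show "d b \<noteq> d b'" using fk by simp
  qed
  have "is_H_coloring G1 x s11 s12 G2 y s21 s22 c d f"
    unfolding is_H_coloring_def
  proof (intro exI[of _ id] conjI)
    show "bij_betw id {1,2,3::nat} {1,2,3}" by simp
    show "id (d y) = c x" using same unfolding d_def c_def by simp
    show "\<forall>e\<in>edges (H_comp G1 x s11 s12 G2 y s21 s22). f e = (case e of Inl a \<Rightarrow> c a | Inr b \<Rightarrow> id (d b))"
      unfolding c_def d_def by (auto split: sum.split)
  qed
  then show ?thesis using pc pd by blast
qed
theorem theorem8:
  fixes G1 :: "('v1, 'e1) mgraph" and G2 :: "('v2, 'e2) mgraph"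
  assumes "cubic G1" and "cubic G2"
  shows "(\<forall>v1 x1 x2 x3 v2 y1 y2 y3.
            Y_data G1 v1 x1 x2 x3 \<and> Y_data G2 v2 y1 y2 y3 \<longrightarrow>
            (\<forall>f. proper3 (Y_comp G1 v1 x1 x2 x3 G2 v2 y1 y2 y3) f \<longrightarrow>
               (\<exists>c d. proper3 G1 c \<and> proper3 G2 d \<and>
                  is_Y_coloring G1 v1 x1 x2 x3 G2 v2 y1 y2 y3 c d f)))
       \<and> (\<forall>x s11 s12 y s21 s22.
            H_data G1 x s11 s12 \<and> H_data G2 y s21 s22 \<longrightarrow>
            (\<forall>f. proper3 (H_comp G1 x s11 s12 G2 y s21 s22) f \<longrightarrow>
               (\<exists>c d. proper3 G1 c \<and> proper3 G2 d \<and>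
                  is_H_coloring G1 x s11 s12 G2 y s21 s22 c d f)))"
    using Y_part[OF assms] H_part[OF assms] by blast

end
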